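(* For every $\lambda\in H$, where $H=\{\lambda\in B_{1/\sqrt2}(0):\ \mathrm{Re}(\lambda)>0,\ \mathrm{Im}(\lambda)>0\}\setminus B_{2/3}(1/3)$, we have $B_{1/2}(0)\subset A_\lambda\{-1,0,1\}$.
   Context: $B_r(z_0)$ is the open disc of radius $r$ centered at $z_0$. For $\lambda\in\mathbb C$ with $|\lambda|<1$, $A_\lambda\{-1,0,1\}=\{\sum_{n\ge0}a_n\lambda^n: a_n\in\{-1,0,1\}\}$, the attractor of the iterated function system $\{\lambda z-1,\lambda z,\lambda z+1\}$. *)

theory Defs
  imports "HOL-Analysis.Analysis"
begin

text \<open>The set of power series sums with digits in {-1,0,1}; the attractor of the IFS
  {lambda z - 1, lambda z, lambda z + 1} for |lambda| < 1.\<close>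
definition attractor_digits :: "complex \<Rightarrow> complex set" where
  "attractor_digits l =
     {z. \<exists>a :: nat \<Rightarrow> int. (\<forall>n. a n \<in> {-1, 0, 1}) \<and> (\<lambda>n. of_int (a n) * l ^ n) sums z}"

definition H_region :: "complex set" where
  "H_region = {l. l \<in> ball 0 (1 / sqrt 2) \<and> Re l > 0 \<and> Im l > 0} - ball (1/3) (2/3)"

end

theory Submission
  imports Defs
begin

lemma H_facts:
  assumes "l \<in> H_region"
  shows "Re l > 0" "Im l > 0" "(Re l)^2 + (Im l)^2 < 1/2"
        "(Re l - 1/3)^2 + (Im l)^2 \<ge> 4/9"
proof -
  from assms have a: "norm l < 1/sqrt 2" "Re l > 0" "Im l > 0" "dist (1/3) l \<ge> 2/3"
    by (auto simp: H_region_def dist_commute)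
  show "Re l > 0" "Im l > 0" using a by auto
  have "norm l ^2 < (1/sqrt 2)^2" using a(1) by (intro power_strict_mono) auto
  then show "(Re l)^2 + (Im l)^2 < 1/2" by (simp add: cmod_power2 power_divide)
  have "dist (1/3) l ^2 \<ge> (2/3)^2" using a(4) by (intro power_mono) auto
  moreover have "dist (1/3) l ^2 = (Re l - 1/3)^2 + (Im l)^2"
  proof -
    have "dist (1/3) l ^2 = (Re (1/3 - l))^2 + (Im (1/3 - l))^2"
      by (simp only: dist_norm cmod_power2)
    thus ?thesis by (simp add: power2_eq_square algebra_simps)
  qed
  ultimately show "(Re l - 1/3)^2 + (Im l)^2 \<ge> 4/9" by (simp add: power2_eq_square)
qed

lemma l_sq:
  fixes l :: complex
  shows "l^2 = 2 * of_real (Re l) * l - of_real ((Re l)^2 + (Im l)^2)"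
  by (simp add: complex_eq_iff power2_eq_square algebra_simps)

theorem mainTheorem3:
  assumes "l \<in> H_region"
  shows "ball 0 (1/2) \<subseteq> attractor_digits l"
proof -
  define u where "u = Re l"
  define v where "v = Im l"
  define r where "r = u^2 + v^2"
  note hf = H_facts[OF assms, folded u_def v_def]
  have u0: "u > 0" and v0: "v > 0" using hf by auto
  have rlt: "r < 1/2" using hf(3) r_def by simp
  have rge: "r \<ge> 1/3 + 2*u/3" using hf(4) unfolding r_def by (simp add: power2_eq_square algebra_simps)
  have r0: "r > 0" using rge u0 by linarith
  define B where "B = 1 / (2*r)"
  define K where "K = {of_real x + of_real y * l | x y. \<bar>x\<bar> \<le> 3/2 \<and> \<bar>y\<bar> \<le> B}"
  have lsq: "l^2 = 2 * of_real u * l - of_real r"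
    using l_sq[of l] unfolding u_def v_def r_def by simp
  have step: "\<exists>d w. d \<in> {-1,0,1::int} \<and> w \<in> K \<and> z = of_int d + l * w" if zK0: "z \<in> K" for z
  proof -
    obtain x y where z: "z = of_real x + of_real y * l" and x: "\<bar>x\<bar> \<le> 3/2" and y: "\<bar>y\<bar> \<le> B"
      using zK0 unfolding K_def by blast
    obtain d :: int where d: "d \<in> {-1,0,1}" and xd: "\<bar>x - d\<bar> \<le> 1/2"
    proof (cases "x \<le> -1/2")
      case True
      have "\<bar>x - of_int (-1)\<bar> \<le> 1/2" using True x by (simp add: abs_if)
      then show ?thesis using that[of "-1"] by auto
    next
      case False
      then show ?thesis
      proof (cases "x \<le> 1/2")
        case True then show ?thesis using False that[of 0] by (auto simp: abs_if)
      next
        case False then show ?thesis using x that[of 1] by (auto simp: abs_if)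
      qed
    qed
    define x' where "x' = y + (2*u/r) * (x - d)"
    define y' where "y' = -(x-d)/r"
    have "\<bar>y'\<bar> \<le> B" unfolding y'_def B_def using xd r0
      by (simp add: abs_div field_simps abs_minus_commute)
    moreover have "\<bar>x'\<bar> \<le> 3/2"
    proof -
      have "\<bar>(2*u/r) * (x - d)\<bar> \<le> (2*u/r) * (1/2)"
        using xd u0 r0 by (simp add: abs_mult mult_left_mono divide_right_mono)
      moreover have "(2*u/r)*(1/2) = u/r" by simp
      ultimately have "\<bar>x'\<bar> \<le> B + u/r" unfolding x'_def using y abs_triangle_ineq[of y "(2*u/r)*(x-d)"] \<open>(2*u/r)*(1/2) = u/r\<close>
        by (smt (verit))
      also have "\<dots> = (1/2 + u)/r" unfolding B_def using r0 by (simp add: field_simps)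
      also have "\<dots> \<le> 3/2" using rge r0 by (simp add: field_simps)
      finally show ?thesis .
    qed
    ultimately have wK: "of_real x' + of_real y' * l \<in> K" unfolding K_def by blast
    have "of_int d + l * (of_real x' + of_real y' * l) = z"
    proof -
      have "of_int d + l * (of_real x' + of_real y' * l)
          = of_int d + of_real x' * l + of_real y' * l^2"
        by (simp add: power2_eq_square algebra_simps)
      also have "\<dots> = of_int d + of_real x' * l + of_real y' * (2 * of_real u * l - of_real r)"
        by (simp add: lsq)
      also have "\<dots> = z"
        unfolding z x'_def y'_def using r0
        by (simp add: complex_eq_iff field_simps)
      finally show ?thesis .
    qed
    then show ?thesis using d wK by metis
  qed
  then obtain D N where DN: "\<And>z. z \<in> K \<Longrightarrow> D z \<in> {-1,0,1::int} \<and> N z \<in> K \<and> z = of_int (D z) + l * N z"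
    by metis
  define M where "M = 3/2 + B * norm l"
  have Kb: "norm w \<le> M" if wK0: "w \<in> K" for w
  proof -
    obtain x y where w: "w = of_real x + of_real y * l" and x: "\<bar>x\<bar> \<le> 3/2" and y: "\<bar>y\<bar> \<le> B"
      using wK0 unfolding K_def by blast
    have "norm w \<le> \<bar>x\<bar> + \<bar>y\<bar> * norm l" unfolding w
      by (metis norm_mult norm_of_real norm_triangle_ineq)
    also have "\<dots> \<le> M" unfolding M_def using x y by (intro add_mono mult_right_mono) auto
    finally show ?thesis .
  qed
  have nl: "norm l < 1"
  proof -
    have "norm l ^ 2 < 1" using hf(3) by (simp add: cmod_power2 u_def v_def)
    thus ?thesis by (metis abs_norm_cancel less_one power2_less_1_iff(1) rel_simps(70) verit_comp_simplify1(3))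
  qed
  have inK: "ball 0 (1/2) \<subseteq> K"
  proof
    fix z :: complex assume "z \<in> ball 0 (1/2)"
    hence nz: "norm z < 1/2" by simp
    define y where "y = Im z / v"
    define x where "x = Re z - y * u"
    have zeq: "z = of_real x + of_real y * l"
      unfolding x_def y_def using v0 by (simp add: complex_eq_iff u_def v_def)
    have ri: "\<bar>Re z\<bar> < 1/2" "\<bar>Im z\<bar> < 1/2"
      using nz abs_Re_le_cmod abs_Im_le_cmod by (metis le_less_trans)+
    have uu: "u*u \<le> u*(2/3)" using rge rlt u0 by (intro mult_left_mono) auto
    have v2: "v^2 \<ge> 1/3" using rge uu unfolding r_def by (simp add: power2_eq_square)
    have vh: "v > 1/2"
    proof (rule ccontr)
      assume "\<not> v > 1/2" hence "v^2 \<le> (1/2)^2" using v0 by (intro power_mono) auto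
      thus False using v2 by (simp add: power2_eq_square)
    qed
    have rv: "r < v" using rlt vh by simp
    have "\<bar>y\<bar> \<le> B"
    proof -
      have "\<bar>y\<bar> = \<bar>Im z\<bar> / v" unfolding y_def using v0 by (simp add: abs_div)
      also have "\<dots> \<le> (1/2) / v" using ri v0 by (simp add: divide_right_mono field_simps)
      also have "\<dots> \<le> (1/2) / r" using rv r0 by (simp add: frac_le)
      finally show ?thesis unfolding B_def by simp
    qed
    moreover have "\<bar>x\<bar> \<le> 3/2"
    proof -
      have u1: "u < 1/4" using rge rlt by linarith
      have "\<bar>y\<bar> \<le> 1" unfolding y_def using ri vh v0 by (simp add: abs_div)
      hence "\<bar>y * u\<bar> \<le> 1" using u0 u1 by (simp add: abs_mult mult_le_one)
      thus ?thesis unfolding x_def using ri by linarith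
    qed
    ultimately show "z \<in> K" unfolding K_def zeq by blast
  qed
  show ?thesis
  proof
    fix z :: complex assume "z \<in> ball 0 (1/2)"
    hence zK: "z \<in> K" using inK by blast
    define zs where "zs n = (N ^^ n) z" for n
    have zsK: "zs n \<in> K" for n
      by (induction n) (auto simp: zs_def zK DN)
    define a where "a n = D (zs n)" for n
    have a: "a n \<in> {-1,0,1}" for n using DN[OF zsK[of n]] a_def by simp
    have part: "z = (\<Sum>k<n. of_int (a k) * l^k) + l^n * zs n" for n
    proof (induction n)
      case 0 then show ?case by (simp add: zs_def)
    next
      case (Suc n)
      have "zs n = of_int (a n) + l * zs (Suc n)"
        using DN[OF zsK[of n]] by (simp add: a_def zs_def)
      with Suc show ?case by (simp add: algebra_simps)
    qed
    have "(\<lambda>n. l^n * zs n) \<longlonglongrightarrow> 0"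
    proof (rule Lim_null_comparison)
      show "\<forall>\<^sub>F n in sequentially. norm (l^n * zs n) \<le> norm l ^ n * M"
        using Kb[OF zsK] by (auto simp: norm_mult norm_power intro!: mult_left_mono always_eventually)
      show "(\<lambda>n. norm l ^ n * M) \<longlonglongrightarrow> 0"
        using nl by (intro tendsto_mult_left_zero LIMSEQ_power_zero) auto
    qed
    hence "(\<lambda>n. z - l^n * zs n) \<longlonglongrightarrow> z - 0" by (intro tendsto_diff) auto
    moreover have "(\<lambda>n. z - l^n * zs n) = (\<lambda>n. \<Sum>k<n. of_int (a k) * l^k)"
      using part by (metis add_diff_cancel_right')
    ultimately have "(\<lambda>n. of_int (a n) * l^n) sums z" unfolding sums_def by simp
    then show "z \<in> attractor_digits l" unfolding attractor_digits_def using a by blast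
  qed
qed

end
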